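(* Let $n\ge 2$, inputs $s_j\in\mathbb{Z}_{c_j}$, outputs in $\mathbb{Z}_d$ with $d$ prime, and let $f$ be a function that is not bipartite linear. Then the vertex $p(k|\mathbf{s})=\delta^k_{f(\mathbf{s})}$ of $\mathcal{P}$ is produced by exactly one non-signalling distribution, and this distribution is a vertex of the non-signalling polytope $\mathcal{NS}$.
   Context: Correlator of $p(\mathbf{m}|\mathbf{s})$: $p(k|\mathbf{s})=\sum_{\mathbf{m}:[\sum_j m_j]_d=k}p(\mathbf{m}|\mathbf{s})$; a distribution "produces" a correlator if this holds. $\mathcal{P}$ is the polytope of all correlator families. Non-signalling: for every subset $\mathcal{J}$ and inputs $\mathbf{s},\mathbf{s}'$ agreeing outside $\mathcal{J}$, $\sum_{(m_j)_{j\in\mathcal{J}}}p(\mathbf{m}|\mathbf{s})=\sum_{(m_j)_{j\in\mathcal{J}}}p(\mathbf{m}|\mathbf{s}')$; $\mathcal{NS}$ is the polytope of all non-signalling conditional distributions. A function $f$ is bipartite linear if for some nonempty proper $\mathcal{J}\subset\{1,\dots,n\}$ there are functions $f^1$ of $(s_j)_{j\in\mathcal{J}}$ and $f^2$ of $(s_j)_{j\notin\mathcal{J}}$ into $\mathbb{Z}_d$ with $f=[f^1+f^2]_d$. *)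

theory Defs
  imports Complex_Main "HOL-Computational_Algebra.Primes"
begin

text \<open>An input tuple s is a function nat => nat with
  s j < c j for j < n and s j = 0 for j >= n (canonical extension). A conditional distribution
  p(m|s) is a function P :: (nat => nat) => (nat => nat) => real, P s m = p(m|s).\<close>

definition inputs :: "nat \<Rightarrow> (nat \<Rightarrow> nat) \<Rightarrow> (nat \<Rightarrow> nat) set" where
  "inputs n c = {s. (\<forall>j<n. s j < c j) \<and> (\<forall>j\<ge>n. s j = 0)}"

definition outputs :: "nat \<Rightarrow> nat \<Rightarrow> (nat \<Rightarrow> nat) set" where
  "outputs n d = {m. (\<forall>j<n. m j < d) \<and> (\<forall>j\<ge>n. m j = 0)}"

definition cond_dist ::
  "nat \<Rightarrow> (nat \<Rightarrow> nat) \<Rightarrow> nat \<Rightarrow> ((nat \<Rightarrow> nat) \<Rightarrow> (nat \<Rightarrow> nat) \<Rightarrow> real) \<Rightarrow> bool" where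
  "cond_dist n c d P \<longleftrightarrow>
     (\<forall>s m. P s m \<ge> 0) \<and>
     (\<forall>s m. s \<notin> inputs n c \<or> m \<notin> outputs n d \<longrightarrow> P s m = 0) \<and>
     (\<forall>s\<in>inputs n c. (\<Sum>m\<in>outputs n d. P s m) = 1)"

definition non_signalling ::
  "nat \<Rightarrow> (nat \<Rightarrow> nat) \<Rightarrow> nat \<Rightarrow> ((nat \<Rightarrow> nat) \<Rightarrow> (nat \<Rightarrow> nat) \<Rightarrow> real) \<Rightarrow> bool" where
  "non_signalling n c d P \<longleftrightarrow>
     (\<forall>J. J \<subseteq> {..<n} \<longrightarrow>
       (\<forall>s\<in>inputs n c. \<forall>s'\<in>inputs n c. (\<forall>j<n. j \<notin> J \<longrightarrow> s j = s' j) \<longrightarrow>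
         (\<forall>m0\<in>outputs n d.
            (\<Sum>m\<in>{m\<in>outputs n d. \<forall>j<n. j \<notin> J \<longrightarrow> m j = m0 j}. P s m) =
            (\<Sum>m\<in>{m\<in>outputs n d. \<forall>j<n. j \<notin> J \<longrightarrow> m j = m0 j}. P s' m))))"

definition NS :: "nat \<Rightarrow> (nat \<Rightarrow> nat) \<Rightarrow> nat \<Rightarrow> ((nat \<Rightarrow> nat) \<Rightarrow> (nat \<Rightarrow> nat) \<Rightarrow> real) set" where
  "NS n c d = {P. cond_dist n c d P \<and> non_signalling n c d P}"

definition correlator ::
  "nat \<Rightarrow> nat \<Rightarrow> ((nat \<Rightarrow> nat) \<Rightarrow> (nat \<Rightarrow> nat) \<Rightarrow> real) \<Rightarrow> (nat \<Rightarrow> nat) \<Rightarrow> nat \<Rightarrow> real" where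
  "correlator n d P s k = (\<Sum>m\<in>{m\<in>outputs n d. (\<Sum>j<n. m j) mod d = k}. P s m)"

definition produces_delta ::
  "nat \<Rightarrow> (nat \<Rightarrow> nat) \<Rightarrow> nat \<Rightarrow> ((nat \<Rightarrow> nat) \<Rightarrow> nat) \<Rightarrow>
   ((nat \<Rightarrow> nat) \<Rightarrow> (nat \<Rightarrow> nat) \<Rightarrow> real) \<Rightarrow> bool" where
  "produces_delta n c d f P \<longleftrightarrow>
     (\<forall>s\<in>inputs n c. \<forall>k<d. correlator n d P s k = (if k = f s then 1 else 0))"

definition vertex_of ::
  "((nat \<Rightarrow> nat) \<Rightarrow> (nat \<Rightarrow> nat) \<Rightarrow> real) \<Rightarrow> ((nat \<Rightarrow> nat) \<Rightarrow> (nat \<Rightarrow> nat) \<Rightarrow> real) set \<Rightarrow> bool" where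
  "vertex_of P S \<longleftrightarrow> P \<in> S \<and>
     (\<forall>Q\<in>S. \<forall>R\<in>S. \<forall>t::real. 0 < t \<and> t < 1 \<and> P = (\<lambda>s m. t * Q s m + (1 - t) * R s m)
        \<longrightarrow> Q = R)"

definition bipartite_linear ::
  "nat \<Rightarrow> (nat \<Rightarrow> nat) \<Rightarrow> nat \<Rightarrow> ((nat \<Rightarrow> nat) \<Rightarrow> nat) \<Rightarrow> bool" where
  "bipartite_linear n c d f \<longleftrightarrow>
     (\<exists>J. J \<noteq> {} \<and> J \<subset> {..<n} \<and>
       (\<exists>f1 f2 :: (nat \<Rightarrow> nat) \<Rightarrow> nat.
          (\<forall>s\<in>inputs n c. f1 s < d \<and> f2 s < d) \<and>
          (\<forall>s\<in>inputs n c. \<forall>s'\<in>inputs n c. (\<forall>j\<in>J. s j = s' j) \<longrightarrow> f1 s = f1 s') \<and>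
          (\<forall>s\<in>inputs n c. \<forall>s'\<in>inputs n c. (\<forall>j<n. j \<notin> J \<longrightarrow> s j = s' j) \<longrightarrow> f2 s = f2 s') \<and>
          (\<forall>s\<in>inputs n c. f s = (f1 s + f2 s) mod d)))"

end

theory Submission
  imports Defs "HOL-Library.FuncSet"
begin

lemma orbit_const:
  fixes g :: "int \<Rightarrow> 'b" and d :: nat and cc :: int
  assumes pd: "prime d" and nd: "\<not> int d dvd cc"
    and per: "\<And>k. g (k mod int d) = g k" and sh: "\<And>k. g (k + cc) = g k"
  shows "g k = g 0"
proof -
  have "prime (int d)" using pd by simp
  then have cop: "coprime (int d) cc" using prime_imp_coprime nd by blast
  then have "gcd cc (int d) = 1" by (simp add: coprime_iff_gcd_eq_1 gcd.commute)
  then obtain u v where uv: "u*cc + v*int d = 1" using bezout_int[of cc "int d"] by auto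
  have ind: "g (int y * cc) = g 0" for y :: nat
  proof (induction y)
    case 0 then show ?case by simp
  next
    case (Suc y)
    have "g (int (Suc y) * cc) = g (int y * cc + cc)" by (simp add: algebra_simps)
    also have "\<dots> = g (int y * cc)" by (rule sh)
    finally show ?case using Suc by simp
  qed
  define y where "y = nat ((k*u) mod int d)"
  have d0: "int d > 0" using pd prime_gt_0_nat by simp
  have iy: "int y = (k*u) mod int d" unfolding y_def using d0 by simp
  have "(int y * cc) mod int d = (k*u*cc) mod int d" unfolding iy by (simp add: mod_mult_left_eq)
  also have "k*u*cc = k - k*v*int d" using uv by (metis add_diff_cancel_right' mult.assoc mult.commute mult.right_neutral right_diff_distrib')
  also have "(k - k*v*int d) mod int d = k mod int d" by (simp add: mod_diff_eq[symmetric])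
  finally have e: "(int y * cc) mod int d = k mod int d" .
  have "g k = g (k mod int d)" using per by simp
  also have "\<dots> = g ((int y * cc) mod int d)" using e by simp
  also have "\<dots> = g (int y * cc)" using per by simp
  also have "\<dots> = g 0" by (rule ind)
  finally show ?thesis .
qed

lemma shift_count:
  fixes A :: "'a set" and \<sigma> :: "'a \<Rightarrow> 'a" and w :: "'a \<Rightarrow> int" and d :: nat and cc :: int
  assumes fin: "finite A" and sub: "\<sigma> ` A \<subseteq> A" and inj: "inj_on \<sigma> A"
    and wsh: "\<forall>x\<in>A. w (\<sigma> x) mod int d = (w x + cc) mod int d"
    and pd: "prime d" and nd: "\<not> int d dvd cc"
  shows "card {x\<in>A. w x mod int d = k mod int d} = card {x\<in>A. w x mod int d = 0}"
proof -
  define g where "g k = card {x\<in>A. w x mod int d = k mod int d}" for k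
  have surj: "\<sigma> ` A = A" using endo_inj_surj[OF fin sub inj] .
  have per: "g (k mod int d) = g k" for k unfolding g_def by simp
  have sh: "g (k + cc) = g k" for k
  proof -
    have img: "\<sigma> ` {x\<in>A. w x mod int d = k mod int d} = {x\<in>A. w x mod int d = (k + cc) mod int d}"
    proof
      show "\<sigma> ` {x\<in>A. w x mod int d = k mod int d} \<subseteq> {x\<in>A. w x mod int d = (k + cc) mod int d}"
      proof
        fix y assume "y \<in> \<sigma> ` {x\<in>A. w x mod int d = k mod int d}"
        then obtain x where x: "x \<in> A" "w x mod int d = k mod int d" "y = \<sigma> x" by auto
        have "w y mod int d = (w x + cc) mod int d" using wsh x by simp
        also have "\<dots> = (k + cc) mod int d" using x(2) by (metis mod_add_left_eq)
        finally show "y \<in> {x\<in>A. w x mod int d = (k + cc) mod int d}" using x sub by auto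
      qed
    next
      show "{x\<in>A. w x mod int d = (k + cc) mod int d} \<subseteq> \<sigma> ` {x\<in>A. w x mod int d = k mod int d}"
      proof
        fix y assume y: "y \<in> {x\<in>A. w x mod int d = (k + cc) mod int d}"
        then obtain x where x: "x \<in> A" "y = \<sigma> x" using surj by auto
        have "(w x + cc) mod int d = (k + cc) mod int d" using wsh x y by auto
        then have "(w x + cc - cc) mod int d = (k + cc - cc) mod int d" by (metis mod_diff_left_eq)
        then have "w x mod int d = k mod int d" by simp
        then show "y \<in> \<sigma> ` {x\<in>A. w x mod int d = k mod int d}" using x by auto
      qed
    qed
    have "g (k + cc) = card (\<sigma> ` {x\<in>A. w x mod int d = k mod int d})" unfolding g_def img ..
    also have "\<dots> = g k" unfolding g_def
      by (rule card_image) (rule inj_on_subset[OF inj], auto)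
    finally show ?thesis .
  qed
  have "g k = g 0" by (rule orbit_const[OF pd nd per sh])
  then show ?thesis unfolding g_def by simp
qed

lemma partition_count:
  fixes A :: "'a set" and w :: "'a \<Rightarrow> int" and d :: nat
  assumes fin: "finite A" and d0: "d > 0"
  shows "(\<Sum>k<d. card {x\<in>A. w x mod int d = int k}) = card A"
proof -
  have eq: "A = (\<Union>k\<in>{..<d}. {x\<in>A. w x mod int d = int k})"
  proof (rule set_eqI, rule iffI)
    fix x assume x: "x \<in> A"
    have "0 \<le> w x mod int d" "w x mod int d < int d" using d0 by auto
    then have "nat (w x mod int d) < d" "int (nat (w x mod int d)) = w x mod int d" by linarith+
    then show "x \<in> (\<Union>k\<in>{..<d}. {x\<in>A. w x mod int d = int k})" using x by (intro UN_I[of "nat (w x mod int d)"]) auto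
    next
    fix x assume "x \<in> (\<Union>k\<in>{..<d}. {x\<in>A. w x mod int d = int k})" then show "x\<in>A" by auto
  qed
  have "card (\<Union>k\<in>{..<d}. {x\<in>A. w x mod int d = int k}) = (\<Sum>k\<in>{..<d}. card {x\<in>A. w x mod int d = int k})"
    by (rule card_UN_disjoint) (use fin in auto)
  then show ?thesis using eq by simp
qed

lemma uniform_count:
  fixes A :: "'a set" and \<sigma> :: "'a \<Rightarrow> 'a" and w :: "'a \<Rightarrow> int" and d :: nat and cc :: int
  assumes fin: "finite A" and sub: "\<sigma> ` A \<subseteq> A" and inj: "inj_on \<sigma> A"
    and wsh: "\<forall>x\<in>A. w (\<sigma> x) mod int d = (w x + cc) mod int d"
    and pd: "prime d" and nd: "\<not> int d dvd cc"
  shows "d * card {x\<in>A. w x mod int d = k mod int d} = card A"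
proof -
  have d0: "d > 0" using pd prime_gt_0_nat by simp
  have "card A = (\<Sum>j<d. card {x\<in>A. w x mod int d = int j})" using partition_count[OF fin d0] by simp
  also have "\<dots> = (\<Sum>j<d. card {x\<in>A. w x mod int d = k mod int d})"
  proof (rule sum.cong)
    fix j assume "j \<in> {..<d}"
    then have "int j mod int d = int j" by simp
    then have "card {x\<in>A. w x mod int d = int j} = card {x\<in>A. w x mod int d = int j mod int d}" by simp
    also have "\<dots> = card {x\<in>A. w x mod int d = 0}" by (rule shift_count[OF assms])
    also have "\<dots> = card {x\<in>A. w x mod int d = k mod int d}" by (rule shift_count[OF assms, symmetric])
    finally show "card {x\<in>A. w x mod int d = int j} = card {x\<in>A. w x mod int d = k mod int d}" .
  qed simp
  finally show ?thesis by simp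
qed

definition lin :: "nat \<Rightarrow> (nat \<Rightarrow> int) \<Rightarrow> (nat \<Rightarrow> nat) \<Rightarrow> int" where
  "lin n z a = (\<Sum>j<n. z j * int (a j))"

lemma outputs_PiE: "outputs n d = (\<lambda>g i. if i < n then g i else 0) ` (PiE {..<n} (\<lambda>_. {..<d}))"
proof (rule set_eqI, rule iffI)
  fix m assume m: "m \<in> outputs n d"
  have "m = (\<lambda>i. if i < n then restrict m {..<n} i else 0)" using m unfolding outputs_def by auto
  moreover have "restrict m {..<n} \<in> PiE {..<n} (\<lambda>_. {..<d})" using m unfolding outputs_def by auto
  ultimately show "m \<in> (\<lambda>g i. if i < n then g i else 0) ` (PiE {..<n} (\<lambda>_. {..<d}))" by blast
qed (auto simp: outputs_def PiE_def Pi_def)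

lemma card_outputs: "card (outputs n d) = d ^ n"
proof -
  have inj: "inj_on (\<lambda>g i. if i < n then g i else (0::nat)) (PiE {..<n} (\<lambda>_. {..<d}))"
  proof (rule inj_onI)
    fix g h assume g: "g \<in> PiE {..<n} (\<lambda>_. {..<d})" and h: "h \<in> PiE {..<n} (\<lambda>_. {..<d})"
      and e: "(\<lambda>i. if i < n then g i else (0::nat)) = (\<lambda>i. if i < n then h i else 0)"
    show "g = h"
    proof (rule PiE_ext[OF g h])
      fix i assume "i \<in> {..<n}" then show "g i = h i" using fun_cong[OF e, of i] by simp
    qed
  qed
  have "card (outputs n d) = card (PiE {..<n} (\<lambda>_. {..<d}))"
    unfolding outputs_PiE by (rule card_image[OF inj])
  also have "\<dots> = d ^ n" by (simp add: card_PiE)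
  finally show ?thesis .
qed

lemma finite_outputs: "d > 0 \<Longrightarrow> finite (outputs n d)"
  using card_outputs[of n d] by (metis card.infinite power_not_zero zero_less_iff_neq_zero)

lemma shift_outputs:
  assumes "j < n" "d > 0"
  shows "(\<lambda>m. m(j := (m j + 1) mod d)) ` outputs n d \<subseteq> outputs n d"
    and "inj_on (\<lambda>m. m(j := (m j + 1) mod d)) (outputs n d)"
proof -
  show "(\<lambda>m. m(j := (m j + 1) mod d)) ` outputs n d \<subseteq> outputs n d"
    using assms unfolding outputs_def by auto
  show "inj_on (\<lambda>m. m(j := (m j + 1) mod d)) (outputs n d)"
  proof (rule inj_onI)
    fix m m' assume m: "m \<in> outputs n d" and m': "m' \<in> outputs n d"
      and e: "m(j := (m j + 1) mod d) = m'(j := (m' j + 1) mod d)"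
    have mj: "m j < d" "m' j < d" using m m' assms unfolding outputs_def by auto
    have "(m j + 1) mod d = (m' j + 1) mod d" using fun_cong[OF e, of j] by simp
    then have "int ((m j + 1) mod d) = int ((m' j + 1) mod d)" by simp
    then have "(int (m j) + 1) mod int d = (int (m' j) + 1) mod int d" by (simp add: zmod_int add.commute)
    then have "(int (m j) + 1 - 1) mod int d = (int (m' j) + 1 - 1) mod int d" by (metis mod_diff_left_eq)
    then have "int (m j) = int (m' j)" using mj by simp
    then have "m j = m' j" by simp
    then show "m = m'" using e by (metis fun_upd_triv fun_upd_upd)
  qed
qed

lemma lin_shift:
  assumes "j < n" "d > 0"
  shows "lin n z (a(j := (a j + 1) mod d)) mod int d = (lin n z a + z j) mod int d"
proof -
  have "lin n z (a(j := (a j + 1) mod d)) = (\<Sum>i<n. z i * int ((a(j := (a j + 1) mod d)) i))"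
    unfolding lin_def ..
  also have "\<dots> = (\<Sum>i<n. z i * int (a i)) - z j * int (a j) + z j * int ((a j + 1) mod d)"
  proof -
    let ?v = "(a j + 1) mod d"
    have fin: "finite {..<n}" by simp
    have jin: "j \<in> {..<n}" using assms(1) by simp
    have s1: "(\<Sum>i<n. z i * int ((a(j := ?v)) i)) = z j * int ?v + (\<Sum>i\<in>{..<n}-{j}. z i * int ((a(j := ?v)) i))"
      using sum.remove[OF fin jin, of "\<lambda>i. z i * int ((a(j := ?v)) i)"] by simp
    have s2: "(\<Sum>i<n. z i * int (a i)) = z j * int (a j) + (\<Sum>i\<in>{..<n}-{j}. z i * int (a i))"
      using sum.remove[OF fin jin, of "\<lambda>i. z i * int (a i)"] by simp
    have s3: "(\<Sum>i\<in>{..<n}-{j}. z i * int ((a(j := ?v)) i)) = (\<Sum>i\<in>{..<n}-{j}. z i * int (a i))"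
      by (rule sum.cong) auto
    have "(\<Sum>i<n. z i * int ((a(j := (a j + 1) mod d)) i)) =
      (\<Sum>i<n. z i * int (a i)) + (z j * int ((a j + 1) mod d) - z j * int (a j))"
      using s1 s2 s3 by simp
    then show ?thesis by simp
  qed
  finally have e: "lin n z (a(j := (a j + 1) mod d)) = lin n z a - z j * int (a j) + z j * ((int (a j) + 1) mod int d)"
    by (simp add: lin_def zmod_int add.commute)
  have "(lin n z a - z j * int (a j) + z j * ((int (a j) + 1) mod int d)) mod int d
      = (lin n z a - z j * int (a j) + z j * (int (a j) + 1)) mod int d"
    by (metis mod_add_right_eq mod_mult_right_eq)
  also have "lin n z a - z j * int (a j) + z j * (int (a j) + 1) = lin n z a + z j" by (simp add: algebra_simps)
  finally show ?thesis using e by simp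
qed

lemma lin_count:
  assumes "j0 < n" "prime d" "\<not> int d dvd z j0"
  shows "d * card {a\<in>outputs n d. lin n z a mod int d = k mod int d} = d ^ n"
proof -
  have d0: "d > 0" using assms(2) prime_gt_0_nat by simp
  have "d * card {a\<in>outputs n d. lin n z a mod int d = k mod int d} = card (outputs n d)"
    by (rule uniform_count[OF finite_outputs[OF d0] shift_outputs[OF assms(1) d0] _ assms(2,3)])
       (use lin_shift[OF assms(1) d0] in auto)
  then show ?thesis by (simp add: card_outputs)
qed

lemma inputs_upd: "s \<in> inputs n c \<Longrightarrow> j < n \<Longrightarrow> x < c j \<Longrightarrow> s(j := x) \<in> inputs n c"
  unfolding inputs_def by auto

lemma agree_induct:
  assumes step: "\<And>s s' j. s \<in> inputs n c \<Longrightarrow> s' \<in> inputs n c \<Longrightarrow> j < n \<Longrightarrow> K j \<Longrightarrow>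
       (\<forall>i. i \<noteq> j \<longrightarrow> s i = s' i) \<Longrightarrow> g s = g s'"
    and s: "s \<in> inputs n c" and s': "s' \<in> inputs n c" and ag: "\<forall>i<n. \<not> K i \<longrightarrow> s i = s' i"
  shows "g s = g s'"
proof -
  define t where "t k = (\<lambda>i. if i < k then s' i else s i)" for k
  have tin: "t k \<in> inputs n c" for k using s s' unfolding t_def inputs_def by auto
  have "k \<le> n \<Longrightarrow> g s = g (t k)" for k
  proof (induction k)
    case 0 then show ?case by (simp add: t_def)
  next
    case (Suc k)
    then have kn: "k < n" by simp
    have diff: "\<forall>i. i \<noteq> k \<longrightarrow> t k i = t (Suc k) i" unfolding t_def by auto
    show ?case
    proof (cases "K k")
      case True
      then have "g (t k) = g (t (Suc k))" using step[OF tin tin kn True diff] by simp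
      then show ?thesis using Suc by simp
    next
      case False
      then have "s k = s' k" using ag kn by simp
      then have "t k = t (Suc k)" unfolding t_def by (auto simp: less_Suc_eq)
      then show ?thesis using Suc by simp
    qed
  qed
  then have "g s = g (t n)" by simp
  also have "t n = s'" using s s' unfolding t_def inputs_def by auto
  finally show ?thesis .
qed

locale box =
  fixes n d :: nat and c :: "nat \<Rightarrow> nat" and f :: "(nat \<Rightarrow> nat) \<Rightarrow> nat"
    and Q :: "(nat \<Rightarrow> nat) \<Rightarrow> (nat \<Rightarrow> nat) \<Rightarrow> real"
  assumes pd: "prime d" and n1: "n \<ge> 1" and c1: "\<forall>j<n. c j \<ge> 1"
    and fd: "\<forall>s\<in>inputs n c. f s < d"
    and QNS: "Q \<in> NS n c d"
    and sup: "\<forall>s\<in>inputs n c. \<forall>m\<in>outputs n d. Q s m \<noteq> 0 \<longrightarrow> (\<Sum>j<n. m j) mod d = f s"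
begin

lemma d0: "d > 0" using pd prime_gt_0_nat by simp
lemma finO: "finite (outputs n d)" using finite_outputs[OF d0] .
lemma cd: "cond_dist n c d Q" using QNS unfolding NS_def by simp
lemma ns: "non_signalling n c d Q" using QNS unfolding NS_def by simp

lemma card_cls:
  assumes "m \<in> outputs n d" "j < n"
  shows "card {m0\<in>outputs n d. \<forall>i<n. i \<noteq> j \<longrightarrow> m i = m0 i} = d"
proof -
  have e: "{m0\<in>outputs n d. \<forall>i<n. i \<noteq> j \<longrightarrow> m i = m0 i} = (\<lambda>k. m(j := k)) ` {..<d}"
  proof (rule set_eqI, rule iffI)
    fix m0 assume "m0 \<in> {m0\<in>outputs n d. \<forall>i<n. i \<noteq> j \<longrightarrow> m i = m0 i}"
    then have m0: "m0 \<in> outputs n d" "\<forall>i<n. i \<noteq> j \<longrightarrow> m i = m0 i" by auto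
    have "m0 = m(j := m0 j)"
    proof
      fix i show "m0 i = (m(j := m0 j)) i"
        using m0 assms unfolding outputs_def by (cases "i < n") auto
    qed
    moreover have "m0 j < d" using m0 assms unfolding outputs_def by auto
    ultimately show "m0 \<in> (\<lambda>k. m(j := k)) ` {..<d}" by blast
  qed (use assms in \<open>auto simp: outputs_def\<close>)
  have "inj_on (\<lambda>k. m(j := k)) {..<d}" by (rule inj_onI) (metis fun_upd_same)
  then show ?thesis unfolding e by (simp add: card_image)
qed

lemma NS_T:
  assumes j: "j < n"
    and h: "\<forall>m\<in>outputs n d. \<forall>m'\<in>outputs n d. (\<forall>i<n. i \<noteq> j \<longrightarrow> m i = m' i) \<longrightarrow> h m = h m'"
  shows "(\<Sum>m0\<in>outputs n d. h m0 * (\<Sum>m\<in>{m\<in>outputs n d. \<forall>i<n. i \<noteq> j \<longrightarrow> m i = m0 i}. Q t m))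
       = real d * (\<Sum>m\<in>outputs n d. Q t m * h m)"
proof -
  let ?O = "outputs n d"
  let ?R = "\<lambda>m m0. \<forall>i<n. i \<noteq> j \<longrightarrow> m i = m0 i"
  have "(\<Sum>m0\<in>?O. h m0 * (\<Sum>m\<in>{m\<in>?O. ?R m m0}. Q t m))
      = (\<Sum>m0\<in>?O. \<Sum>m\<in>?O. (if ?R m m0 then Q t m * h m else 0))"
  proof (rule sum.cong[OF refl])
    fix m0 assume m0: "m0 \<in> ?O"
    have "h m0 * (\<Sum>m\<in>{m\<in>?O. ?R m m0}. Q t m) = (\<Sum>m\<in>{m\<in>?O. ?R m m0}. Q t m * h m)"
      unfolding sum_distrib_left
    proof (rule sum.cong[OF refl])
      fix m assume "m \<in> {m\<in>?O. ?R m m0}"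
      then have "h m = h m0" using h m0 by blast
      then show "h m0 * Q t m = Q t m * h m" by simp
    qed
    also have "\<dots> = (\<Sum>m\<in>?O. (if ?R m m0 then Q t m * h m else 0))"
      by (rule sum.inter_filter[OF finO])
    finally show "h m0 * (\<Sum>m\<in>{m\<in>?O. ?R m m0}. Q t m) = (\<Sum>m\<in>?O. (if ?R m m0 then Q t m * h m else 0))" .
  qed
  also have "\<dots> = (\<Sum>m\<in>?O. \<Sum>m0\<in>?O. (if ?R m m0 then Q t m * h m else 0))"
    by (rule sum.swap)
  also have "\<dots> = (\<Sum>m\<in>?O. Q t m * h m * real d)"
  proof (rule sum.cong[OF refl])
    fix m assume m: "m \<in> ?O"
    have "(\<Sum>m0\<in>?O. (if ?R m m0 then Q t m * h m else 0)) = (\<Sum>m0\<in>{m0\<in>?O. ?R m m0}. Q t m * h m)"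
      by (rule sum.inter_filter[OF finO, symmetric])
    also have "\<dots> = Q t m * h m * real d" using card_cls[OF m j] by simp
    finally show "(\<Sum>m0\<in>?O. (if ?R m m0 then Q t m * h m else 0)) = Q t m * h m * real d" .
  qed
  also have "\<dots> = real d * (\<Sum>m\<in>?O. Q t m * h m)" by (simp add: sum_distrib_left mult.commute)
  finally show ?thesis .
qed

lemma NS_fun:
  assumes s: "s \<in> inputs n c" and s': "s' \<in> inputs n c" and j: "j < n"
    and ag: "\<forall>i. i \<noteq> j \<longrightarrow> s i = s' i"
    and h: "\<forall>m\<in>outputs n d. \<forall>m'\<in>outputs n d. (\<forall>i<n. i \<noteq> j \<longrightarrow> m i = m' i) \<longrightarrow> h m = h m'"
  shows "(\<Sum>m\<in>outputs n d. Q s m * h m) = (\<Sum>m\<in>outputs n d. Q s' m * h m)"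
proof -
  have NSJ: "\<forall>s\<in>inputs n c. \<forall>s'\<in>inputs n c. (\<forall>i<n. i \<notin> {j} \<longrightarrow> s i = s' i) \<longrightarrow>
         (\<forall>m0\<in>outputs n d.
            (\<Sum>m\<in>{m\<in>outputs n d. \<forall>i<n. i \<notin> {j} \<longrightarrow> m i = m0 i}. Q s m) =
            (\<Sum>m\<in>{m\<in>outputs n d. \<forall>i<n. i \<notin> {j} \<longrightarrow> m i = m0 i}. Q s' m))"
  proof -
    have sub: "{j} \<subseteq> {..<n}" using j by simp
    show ?thesis using mp[OF spec[OF ns[unfolded non_signalling_def], where x="{j}"] sub] .
  qed
  have ag': "\<forall>i<n. i \<notin> {j} \<longrightarrow> s i = s' i" using ag by simp
  have eq: "(\<Sum>m\<in>{m\<in>outputs n d. \<forall>i<n. i \<noteq> j \<longrightarrow> m i = m0 i}. Q s m)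
      = (\<Sum>m\<in>{m\<in>outputs n d. \<forall>i<n. i \<noteq> j \<longrightarrow> m i = m0 i}. Q s' m)" if "m0 \<in> outputs n d" for m0
    using NSJ[rule_format, OF s s' ag'[rule_format] that] by simp
  have "real d * (\<Sum>m\<in>outputs n d. Q s m * h m) = real d * (\<Sum>m\<in>outputs n d. Q s' m * h m)"
    unfolding NS_T[OF j h, symmetric] by (rule sum.cong[OF refl]) (simp only: eq)
  then show ?thesis using d0 by simp
qed

lemma Qnn: "Q s m \<ge> 0" using cd unfolding cond_dist_def by simp
lemma Qout: "s \<notin> inputs n c \<or> m \<notin> outputs n d \<Longrightarrow> Q s m = 0" using cd unfolding cond_dist_def by simp
lemma Qsum: "s \<in> inputs n c \<Longrightarrow> (\<Sum>m\<in>outputs n d. Q s m) = 1" using cd unfolding cond_dist_def by simp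

definition D :: "(nat \<Rightarrow> int) \<Rightarrow> (nat \<Rightarrow> nat) \<Rightarrow> int \<Rightarrow> real" where
  "D a s u = (\<Sum>m\<in>outputs n d. Q s m * (if lin n a m mod int d = u mod int d then 1 else 0))"

lemma D_per: "D a s (u mod int d) = D a s u" unfolding D_def by simp

lemma ind_sum: "(\<Sum>u<d. (if x mod int d = int u mod int d then 1 else 0 :: real)) = 1"
proof -
  have "(\<Sum>u<d. (if x mod int d = int u mod int d then 1 else 0 :: real))
      = (\<Sum>u<d. (if u = nat (x mod int d) then 1 else 0 :: real))"
  proof (rule sum.cong[OF refl])
    fix u assume "u \<in> {..<d}"
    then have "int u mod int d = int u" by simp
    moreover have "x mod int d \<ge> 0" using d0 by simp
    ultimately have "(x mod int d = int u mod int d) = (u = nat (x mod int d))" by auto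
    then show "(if x mod int d = int u mod int d then 1 else 0 :: real) = (if u = nat (x mod int d) then 1 else 0)" by simp
  qed
  also have "\<dots> = 1"
  proof -
    have "nat (x mod int d) < d" using d0 by (simp add: nat_less_iff)
    then show ?thesis by (simp add: sum.delta)
  qed
  finally show ?thesis .
qed

lemma D_sum: "s \<in> inputs n c \<Longrightarrow> (\<Sum>u<d. D a s (int u)) = 1"
proof -
  assume s: "s \<in> inputs n c"
  have "(\<Sum>u<d. D a s (int u)) = (\<Sum>m\<in>outputs n d. \<Sum>u<d. Q s m * (if lin n a m mod int d = int u mod int d then 1 else 0))"
    unfolding D_def by (rule sum.swap)
  also have "\<dots> = (\<Sum>m\<in>outputs n d. Q s m)"
    by (rule sum.cong[OF refl]) (simp only: sum_distrib_left[symmetric] ind_sum mult_1_right)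
  also have "\<dots> = 1" using Qsum[OF s] .
  finally show ?thesis .
qed

lemma add_mod_cancel: "((x::int) + y) mod m = (u + y) mod m \<longleftrightarrow> x mod m = u mod m"
  by (metis add_diff_cancel_right' mod_add_cong mod_diff_cong)

lemma lin_sub: "lin n (\<lambda>i. a i - a j) m = lin n a m - a j * int (\<Sum>i<n. m i)"
  unfolding lin_def by (simp add: algebra_simps sum_subtractf sum_distrib_left)

lemma E_D:
  assumes t: "t \<in> inputs n c"
  shows "(\<Sum>m\<in>outputs n d. Q t m * (if lin n (\<lambda>i. a i - a j) m mod int d = u mod int d then 1 else 0))
       = D a t (u + a j * int (f t))"
  unfolding D_def
proof (rule sum.cong[OF refl])
  fix m assume m: "m \<in> outputs n d"
  show "Q t m * (if lin n (\<lambda>i. a i - a j) m mod int d = u mod int d then 1 else 0) =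
        Q t m * (if lin n a m mod int d = (u + a j * int (f t)) mod int d then 1 else 0)"
  proof (cases "Q t m = 0")
    case False
    then have "(\<Sum>i<n. m i) mod d = f t" using sup t m by blast
    then have sm: "int (\<Sum>i<n. m i) mod int d = int (f t)" by (metis zmod_int)
    have "lin n a m mod int d = (lin n (\<lambda>i. a i - a j) m + a j * int (\<Sum>i<n. m i)) mod int d"
      by (simp add: lin_sub)
    also have "\<dots> = (lin n (\<lambda>i. a i - a j) m + a j * int (f t)) mod int d"
      using sm by (metis mod_add_right_eq mod_mult_right_eq)
    finally have "(lin n a m mod int d = (u + a j * int (f t)) mod int d)
        = (lin n (\<lambda>i. a i - a j) m mod int d = u mod int d)" using add_mod_cancel by simp
    then show ?thesis by simp
  qed simp
qed

lemma D_step: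
  assumes s: "s \<in> inputs n c" and s': "s' \<in> inputs n c" and j: "j < n"
    and ag: "\<forall>i. i \<noteq> j \<longrightarrow> s i = s' i"
  shows "D a s' v = D a s (v - a j * (int (f s') - int (f s)))"
proof -
  let ?h = "\<lambda>u (m::nat\<Rightarrow>nat). (if lin n (\<lambda>i. a i - a j) m mod int d = u mod int d then 1 else 0 :: real)"
  have h: "\<forall>m\<in>outputs n d. \<forall>m'\<in>outputs n d. (\<forall>i<n. i \<noteq> j \<longrightarrow> m i = m' i) \<longrightarrow> ?h u m = ?h u m'" for u
  proof (intro ballI impI)
    fix m m' :: "nat \<Rightarrow> nat" assume "\<forall>i<n. i \<noteq> j \<longrightarrow> m i = m' i"
    then have "lin n (\<lambda>i. a i - a j) m = lin n (\<lambda>i. a i - a j) m'"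
      unfolding lin_def by (intro sum.cong) auto
    then show "?h u m = ?h u m'" by simp
  qed
  have "D a s' v = D a s' ((v - a j * int (f s')) + a j * int (f s'))" by simp
  also have "\<dots> = (\<Sum>m\<in>outputs n d. Q s' m * ?h (v - a j * int (f s')) m)" using E_D[OF s'] by simp
  also have "\<dots> = (\<Sum>m\<in>outputs n d. Q s m * ?h (v - a j * int (f s')) m)"
    using NS_fun[OF s s' j ag h] by simp
  also have "\<dots> = D a s ((v - a j * int (f s')) + a j * int (f s))" using E_D[OF s] by simp
  also have "(v - a j * int (f s')) + a j * int (f s) = v - a j * (int (f s') - int (f s))" by (simp add: algebra_simps)
  finally show ?thesis .
qed

end

context box begin

definition Dconst :: "(nat \<Rightarrow> int) \<Rightarrow> (nat \<Rightarrow> nat) \<Rightarrow> bool" where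
  "Dconst a s \<longleftrightarrow> (\<forall>u. D a s u = D a s 0)"

lemma const_step:
  assumes s: "s \<in> inputs n c" and s': "s' \<in> inputs n c" and j: "j < n"
    and ag: "\<forall>i. i \<noteq> j \<longrightarrow> s i = s' i"
  shows "Dconst a s = Dconst a s'"
proof -
  have ag': "\<forall>i. i \<noteq> j \<longrightarrow> s' i = s i" using ag by simp
  have 1: "D a s' v = D a s (v - a j * (int (f s') - int (f s)))" for v by (rule D_step[OF s s' j ag])
  have 2: "D a s v = D a s' (v - a j * (int (f s) - int (f s')))" for v by (rule D_step[OF s' s j ag'])
  show ?thesis
  proof
    assume "Dconst a s" then show "Dconst a s'" unfolding Dconst_def using 1 by metis
  next
    assume "Dconst a s'" then show "Dconst a s" unfolding Dconst_def using 2 by metis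
  qed
qed

lemma const_all:
  assumes s: "s \<in> inputs n c" and s': "s' \<in> inputs n c"
  shows "Dconst a s = Dconst a s'"
  by (rule agree_induct[where K="\<lambda>_. True", OF const_step s s']) auto

lemma mixed:
  assumes b: "b \<in> inputs n c" and i: "i < n" and j: "j < n" and ij: "i \<noteq> j"
    and x: "x < c i" and y: "y < c j" and nc: "\<not> Dconst a b" and aij: "\<not> int d dvd (a i - a j)"
  shows "int d dvd (int (f (b(i := x, j := y))) - int (f (b(i := x))) - int (f (b(j := y))) + int (f b))"
proof -
  define bi where "bi = b(i := x)"
  define bj where "bj = b(j := y)"
  define bij where "bij = b(i := x, j := y)"
  have bi: "bi \<in> inputs n c" unfolding bi_def by (rule inputs_upd[OF b i x])
  have bj: "bj \<in> inputs n c" unfolding bj_def by (rule inputs_upd[OF b j y])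
  have bij: "bij \<in> inputs n c" unfolding bij_def by (rule inputs_upd[OF inputs_upd[OF b i x] j y])
  define F where "F s = int (f s)" for s
  have e1: "D a bi v = D a b (v - a i * (F bi - F b))" for v
    unfolding F_def by (rule D_step[OF b bi i]) (auto simp: bi_def)
  have e2: "D a bij v = D a bj (v - a i * (F bij - F bj))" for v
    unfolding F_def by (rule D_step[OF bj bij i]) (use ij in \<open>auto simp: bj_def bij_def\<close>)
  have e3: "D a bj v = D a b (v - a j * (F bj - F b))" for v
    unfolding F_def by (rule D_step[OF b bj j]) (auto simp: bj_def)
  have e4: "D a bij v = D a bi (v - a j * (F bij - F bi))" for v
    unfolding F_def by (rule D_step[OF bi bij j]) (auto simp: bi_def bij_def)
  define M where "M = F bij - F bi - F bj + F b"
  define cc where "cc = (a j - a i) * M"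
  have sh: "D a b (w + cc) = D a b w" for w
  proof -
    define v where "v = w + a j * (F bij - F bi) + a i * (F bi - F b)"
    have "D a bij v = D a b w" unfolding e4 e1 v_def by (simp add: algebra_simps)
    moreover have "D a bij v = D a b (w + cc)" unfolding e2 e3 v_def cc_def M_def
      by (rule arg_cong[where f="D a b"]) (simp add: algebra_simps)
    ultimately show ?thesis by simp
  qed
  have "int d dvd cc"
  proof (rule ccontr)
    assume "\<not> int d dvd cc"
    then have "D a b k = D a b 0" for k by (rule orbit_const[OF pd _ D_per sh])
    then show False using nc unfolding Dconst_def by simp
  qed
  moreover have "prime (int d)" using pd by simp
  moreover have "\<not> int d dvd (a j - a i)" using aij by (metis dvd_minus_iff minus_diff_eq)
  ultimately have "int d dvd M" unfolding cc_def using prime_dvd_mult_iff by blast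
  then show ?thesis unfolding M_def F_def bij_def bi_def bj_def .
qed

end

context box begin

lemma nonconst_bl:
  assumes i0: "i0 < n" and ai0: "\<not> int d dvd (a i0 - a 0)"
    and s1: "s1 \<in> inputs n c" and nc1: "\<not> Dconst a s1"
  shows "bipartite_linear n c d f"
proof -
  define J where "J = {j. j < n \<and> int d dvd (a j - a 0)}"
  define F where "F s = int (f s)" for s
  define s0 :: "nat \<Rightarrow> nat" where "s0 = (\<lambda>_. 0)"
  have s0: "s0 \<in> inputs n c" using c1 unfolding s0_def inputs_def by auto
  have Jsub: "J \<subseteq> {..<n}" unfolding J_def by auto
  have nc: "\<not> Dconst a b" if "b \<in> inputs n c" for b using const_all[OF s1 that] nc1 by simp
  have sep: "\<not> int d dvd (a i - a j)" if "i \<in> J" "j < n" "j \<notin> J" for i j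
  proof
    assume "int d dvd (a i - a j)"
    moreover have "int d dvd (a i - a 0)" using that J_def by simp
    ultimately have "int d dvd ((a i - a 0) - (a i - a j))" by (rule dvd_diff[rotated])
    then have "int d dvd (a j - a 0)" by simp
    then show False using that J_def by simp
  qed
  have MD: "(F (b(i := x, j := y)) - F (b(i := x))) mod int d = (F (b(j := y)) - F b) mod int d"
    if "b \<in> inputs n c" "i \<in> J" "j < n" "j \<notin> J" "x < c i" "y < c j" for b i j x y
  proof -
    have i: "i < n" and ij: "i \<noteq> j" using that Jsub by auto
    have dv: "int d dvd (F (b(i := x, j := y)) - F (b(i := x)) - F (b(j := y)) + F b)"
      unfolding F_def by (rule mixed[OF that(1) i that(3) ij that(5,6) nc[OF that(1)] sep[OF that(2,3,4)]])
    have "(F (b(i := x, j := y)) - F (b(i := x))) - (F (b(j := y)) - F b) = F (b(i := x, j := y)) - F (b(i := x)) - F (b(j := y)) + F b"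
      by simp
    then show ?thesis using dv by (simp only: mod_eq_dvd_iff)
  qed
  define mg where "mg u t = (\<lambda>k. if k \<in> J then u k else t k)" for u t :: "nat \<Rightarrow> nat"
  have mgin: "mg u t \<in> inputs n c" if "u \<in> inputs n c" "t \<in> inputs n c" for u t
    using that Jsub unfolding mg_def inputs_def by auto
  have mgmg: "mg (mg u t) t' = mg u t'" for u t t' unfolding mg_def by auto
  have stepA: "(F (mg u t') - F (mg u t)) mod int d = (F (mg s0 t') - F (mg s0 t)) mod int d"
    if u: "u \<in> inputs n c" and t: "t \<in> inputs n c" and t': "t' \<in> inputs n c" and j: "j < n" "j \<notin> J"
      and agt: "\<forall>k. k \<noteq> j \<longrightarrow> t k = t' k" for u t t' j
  proof -
    define g where "g u = (F (mg u t') - F (mg u t)) mod int d" for u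
    have gstep: "g u1 = g u2" if u1: "u1 \<in> inputs n c" and u2: "u2 \<in> inputs n c" and "i < n" "i \<in> J"
      and ag: "\<forall>k. k \<noteq> i \<longrightarrow> u1 k = u2 k" for u1 u2 i
    proof -
      define b where "b = mg u1 t"
      have b: "b \<in> inputs n c" unfolding b_def by (rule mgin[OF u1 t])
      have ij: "i \<noteq> j" using that j by auto
      have xu: "u2 i < c i" using u2 \<open>i < n\<close> unfolding inputs_def by auto
      have yt: "t' j < c j" using t' j unfolding inputs_def by auto
      have r1: "mg u2 t = b(i := u2 i)" unfolding b_def mg_def by (rule ext) (use ag \<open>i \<in> J\<close> in auto)
      have r2: "mg u1 t' = b(j := t' j)" unfolding b_def mg_def by (rule ext) (use agt j in auto)
      have r3: "mg u2 t' = b(i := u2 i, j := t' j)" unfolding b_def mg_def by (rule ext) (use ag agt j \<open>i \<in> J\<close> in auto)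
      have "(F (b(i := u2 i, j := t' j)) - F (b(i := u2 i))) mod int d = (F (b(j := t' j)) - F b) mod int d"
        by (rule MD[OF b \<open>i \<in> J\<close> j xu yt])
      then show ?thesis unfolding g_def r1 r2 r3 b_def by simp
    qed
    have "g (mg u s0) = g s0"
      by (rule agree_induct[where K="\<lambda>k. k \<in> J", OF gstep mgin[OF u s0] s0]) (auto simp: mg_def)
    then show ?thesis unfolding g_def mgmg .
  qed
  have key: "(F s - F (mg s0 s)) mod int d = (F (mg s s0) - F s0) mod int d" if s: "s \<in> inputs n c" for s
  proof -
    define g where "g t = (F (mg s t) - F (mg s0 t)) mod int d" for t
    have gstep: "g t = g t'" if t: "t \<in> inputs n c" and t': "t' \<in> inputs n c" and j: "j < n"
      and ag: "\<forall>k. k \<noteq> j \<longrightarrow> t k = t' k" for t t' j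
    proof (cases "j \<in> J")
      case True
      have "mg s t = mg s t'" unfolding mg_def by (rule ext) (use ag True in auto)
      moreover have "mg s0 t = mg s0 t'" unfolding mg_def by (rule ext) (use ag True in auto)
      ultimately show ?thesis unfolding g_def by simp
    next
      case False
      have "(F (mg s t') - F (mg s t)) mod int d = (F (mg s0 t') - F (mg s0 t)) mod int d"
        by (rule stepA[OF s t t' j False ag])
      then have "(F (mg s t') - F (mg s t) + (F (mg s t) - F (mg s0 t'))) mod int d
          = (F (mg s0 t') - F (mg s0 t) + (F (mg s t) - F (mg s0 t'))) mod int d"
        by (rule mod_add_cong) simp_all
      then show ?thesis unfolding g_def by (simp add: algebra_simps)
    qed
    have "g s = g s0" by (rule agree_induct[where K="\<lambda>_. True", OF gstep s s0]) auto
    moreover have "mg s s = s" "mg s0 s0 = s0" unfolding mg_def by auto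
    ultimately show ?thesis unfolding g_def by simp
  qed
  define f1 where "f1 s = f (mg s s0)" for s
  define f2 where "f2 s = (f (mg s0 s) + (d - f s0)) mod d" for s
  have fs0: "f s0 < d" using fd s0 by simp
  show ?thesis
    unfolding bipartite_linear_def
  proof (intro exI conjI)
    show "J \<noteq> {}" using n1 unfolding J_def by (auto intro!: exI[of _ 0])
    show "J \<subset> {..<n}" using Jsub i0 ai0 unfolding J_def by auto
    show "\<forall>s\<in>inputs n c. f1 s < d \<and> f2 s < d"
      using fd mgin s0 d0 unfolding f1_def f2_def by auto
    show "\<forall>s\<in>inputs n c. \<forall>s'\<in>inputs n c. (\<forall>j\<in>J. s j = s' j) \<longrightarrow> f1 s = f1 s'"
      unfolding f1_def mg_def by (auto intro!: arg_cong[where f=f])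
    show "\<forall>s\<in>inputs n c. \<forall>s'\<in>inputs n c. (\<forall>j<n. j \<notin> J \<longrightarrow> s j = s' j) \<longrightarrow> f2 s = f2 s'"
    proof (intro ballI impI)
      fix s s' assume s: "s \<in> inputs n c" and s': "s' \<in> inputs n c" and ag: "\<forall>j<n. j \<notin> J \<longrightarrow> s j = s' j"
      have "mg s0 s = mg s0 s'"
      proof
        fix k show "mg s0 s k = mg s0 s' k"
          using ag s s' unfolding mg_def inputs_def by (cases "k < n") auto
      qed
      then show "f2 s = f2 s'" unfolding f2_def by simp
    qed
    show "\<forall>s\<in>inputs n c. f s = (f1 s + f2 s) mod d"
    proof
      fix s assume s: "s \<in> inputs n c"
      have k: "(F s - F (mg s0 s)) mod int d = (F (mg s s0) - F s0) mod int d" by (rule key[OF s])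
      have "int ((f1 s + f2 s) mod d) = (F (mg s s0) + (F (mg s0 s) + int d - F s0) mod int d) mod int d"
        unfolding f1_def f2_def F_def using fs0 by (simp add: zmod_int of_nat_diff)
      also have "\<dots> = (F (mg s s0) + F (mg s0 s) - F s0 + int d) mod int d" by (simp add: mod_add_right_eq algebra_simps)
      also have "\<dots> = (F (mg s s0) + F (mg s0 s) - F s0) mod int d" by simp
      also have "\<dots> = ((F (mg s s0) - F s0) + F (mg s0 s)) mod int d" by (simp add: algebra_simps)
      also have "\<dots> = ((F s - F (mg s0 s)) + F (mg s0 s)) mod int d" using k by (metis mod_add_left_eq)
      also have "\<dots> = F s mod int d" by simp
      also have "\<dots> = F s" unfolding F_def using fd s by simp
      finally show "f s = (f1 s + f2 s) mod d" unfolding F_def by linarith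
    qed
  qed
qed

end

context box begin

lemma D_uniform:
  assumes nbl: "\<not> bipartite_linear n c d f"
    and i0: "i0 < n" and ai0: "\<not> int d dvd (a i0 - a 0)" and s: "s \<in> inputs n c"
  shows "D a s u = 1 / real d"
proof -
  have dc: "Dconst a s" using nonconst_bl[OF i0 ai0 s] nbl by blast
  have dcu: "D a s (int u) = D a s 0" for u using dc unfolding Dconst_def by blast
  have "1 = (\<Sum>u<d. D a s (int u))" using D_sum[OF s] by simp
  also have "\<dots> = (\<Sum>u<d. D a s 0)" by (simp only: dcu)
  also have "\<dots> = real d * D a s 0" by simp
  finally have "D a s 0 = 1 / real d" using d0 by (simp add: field_simps)
  then show ?thesis using dc unfolding Dconst_def by simp
qed

lemma small_dvd:
  fixes x :: int
  assumes "int d dvd x" "\<bar>x\<bar> < int d"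
  shows "x = 0"
proof (rule ccontr)
  assume "x \<noteq> 0"
  then have "\<bar>int d\<bar> \<le> \<bar>x\<bar>" by (rule dvd_imp_le_int) (rule assms(1))
  then show False using assms(2) by simp
qed

lemma lin_comm: "lin n (\<lambda>j. int (a j)) m = lin n (\<lambda>j. int (m j)) a"
  unfolding lin_def by (simp add: mult.commute)

lemma lin_diff: "lin n (\<lambda>j. int (m j) - int (m0 j)) a = lin n (\<lambda>j. int (m j)) a - lin n (\<lambda>j. int (m0 j)) a"
  unfolding lin_def by (simp add: algebra_simps sum_subtractf)

lemma lin_const: "lin n (\<lambda>j. int (if j < n then t else 0)) m = int t * int (\<Sum>j<n. m j)"
  unfolding lin_def by (simp add: sum_distrib_left)

lemma count_m:
  assumes m: "m \<in> outputs n d" and m0: "m0 \<in> outputs n d" and ne: "m \<noteq> m0"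
  shows "d * card {a\<in>outputs n d. lin n (\<lambda>j. int (a j)) m mod int d = lin n (\<lambda>j. int (a j)) m0 mod int d} = d ^ n"
proof -
  obtain j where j: "j < n" "m j \<noteq> m0 j"
  proof -
    have "\<exists>j<n. m j \<noteq> m0 j"
    proof (rule ccontr)
      assume "\<not> (\<exists>j<n. m j \<noteq> m0 j)"
      then have "m = m0"
      proof -
        assume h: "\<not> (\<exists>j<n. m j \<noteq> m0 j)"
        show "m = m0"
        proof
          fix i show "m i = m0 i" using h m m0 unfolding outputs_def by (cases "i < n") auto
        qed
      qed
      then show False using ne by simp
    qed
    then show ?thesis using that by blast
  qed
  define z where "z j = int (m j) - int (m0 j)" for j
  have lt: "m j < d" "m0 j < d" using m m0 j unfolding outputs_def by auto
  have nd: "\<not> int d dvd z j"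
  proof
    assume "int d dvd z j"
    moreover have "\<bar>z j\<bar> < int d" unfolding z_def using lt by auto
    ultimately have "z j = 0" by (rule small_dvd)
    then show False using j unfolding z_def by simp
  qed
  have e: "{a\<in>outputs n d. lin n (\<lambda>j. int (a j)) m mod int d = lin n (\<lambda>j. int (a j)) m0 mod int d}
      = {a\<in>outputs n d. lin n z a mod int d = 0 mod int d}"
    unfolding z_def lin_diff lin_comm[of _ m] lin_comm[of _ m0] by (simp add: mod_eq_dvd_iff dvd_eq_mod_eq_0)
  show ?thesis unfolding e by (rule lin_count[where z=z, OF j(1) pd nd])
qed

lemma inversion:
  assumes nbl: "\<not> bipartite_linear n c d f"
    and s: "s \<in> inputs n c" and m0: "m0 \<in> outputs n d" and sm0: "(\<Sum>j<n. m0 j) mod d = f s"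
  shows "Q s m0 = 1 / real d ^ (n - 1)"
proof -
  let ?O = "outputs n d"
  define X where "X a = D (\<lambda>j. int (a j)) s (lin n (\<lambda>j. int (a j)) m0)" for a :: "nat \<Rightarrow> nat"
  define C where "C = (\<lambda>t. \<lambda>i. if i < n then t else (0::nat)) ` {..<d}"
  have CO: "C \<subseteq> ?O" unfolding C_def outputs_def by auto
  have cardC: "card C = d"
  proof -
    have "inj_on (\<lambda>t. \<lambda>i. if i < n then t else (0::nat)) {..<d}"
    proof (rule inj_onI)
      fix t t' assume "(\<lambda>i. if i < n then t else (0::nat)) = (\<lambda>i. if i < n then t' else 0)"
      from fun_cong[OF this, of 0] show "t = t'" using n1 by simp
    qed
    then show ?thesis unfolding C_def by (simp add: card_image)
  qed
  have XC: "X a = 1" if aC: "a \<in> C" for a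
  proof -
    obtain t where t: "a = (\<lambda>i. if i < n then t else 0)" using aC unfolding C_def by blast
    have "X a = (\<Sum>m\<in>?O. Q s m)"
      unfolding X_def D_def
    proof (rule sum.cong[OF refl])
      fix m assume m: "m \<in> ?O"
      show "Q s m * (if lin n (\<lambda>j. int (a j)) m mod int d = lin n (\<lambda>j. int (a j)) m0 mod int d then 1 else 0) = Q s m"
      proof (cases "Q s m = 0")
        case False
        then have "(\<Sum>j<n. m j) mod d = f s" using sup s m by blast
        then have "int (\<Sum>j<n. m j) mod int d = int (\<Sum>j<n. m0 j) mod int d" using sm0 by (metis zmod_int)
        then have "(int t * int (\<Sum>j<n. m j)) mod int d = (int t * int (\<Sum>j<n. m0 j)) mod int d"
          by (metis mod_mult_right_eq)
        then show ?thesis unfolding t lin_const by simp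
      qed simp
    qed
    then show ?thesis using Qsum[OF s] by simp
  qed
  have XN: "X a = 1 / real d" if "a \<in> ?O - C" for a
  proof -
    have aO: "a \<in> ?O" and aC: "a \<notin> C" using that by auto
    have "\<exists>i0<n. a i0 \<noteq> a 0"
    proof (rule ccontr)
      assume "\<not> (\<exists>i0<n. a i0 \<noteq> a 0)"
      then have "a = (\<lambda>i. if i < n then a 0 else 0)"
      proof -
        assume h: "\<not> (\<exists>i0<n. a i0 \<noteq> a 0)"
        show ?thesis
        proof
          fix i show "a i = (if i < n then a 0 else 0)"
          proof (cases "i < n")
            case True then show ?thesis using h by (metis (mono_tags))
          next
            case False then show ?thesis using aO unfolding outputs_def by auto
          qed
        qed
      qed
      moreover have "a 0 < d" using aO n1 unfolding outputs_def by auto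
      ultimately have "a \<in> C" unfolding C_def by (intro image_eqI[where x="a 0"]) auto
      then show False using aC by simp
    qed
    then obtain i0 where i0: "i0 < n" "a i0 \<noteq> a 0" by blast
    have lt: "a i0 < d" "a 0 < d" using aO i0 n1 unfolding outputs_def by auto
    have nd: "\<not> int d dvd (int (a i0) - int (a 0))"
    proof
      assume "int d dvd (int (a i0) - int (a 0))"
      moreover have "\<bar>int (a i0) - int (a 0)\<bar> < int d" using lt by auto
      ultimately have "int (a i0) - int (a 0) = 0" by (rule small_dvd)
      then show False using i0 by simp
    qed
    show ?thesis unfolding X_def by (rule D_uniform[OF nbl i0(1) _ s]) (use nd in simp)
  qed
  have finO: "finite ?O" by (rule finO)
  have L: "(\<Sum>a\<in>?O. X a) = real d + (real d ^ n - real d) / real d"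
  proof -
    have "(\<Sum>a\<in>?O. X a) = (\<Sum>a\<in>?O - C. X a) + (\<Sum>a\<in>C. X a)"
      using sum.subset_diff[OF CO finO] by simp
    also have "\<dots> = real (card (?O - C)) / real d + real d"
      using XC XN cardC by simp
    also have "card (?O - C) = d ^ n - d" using card_Diff_subset[OF finite_subset[OF CO finO] CO] cardC card_outputs by simp
    also have "real (d ^ n - d) = real d ^ n - real d"
    proof -
      have "d \<le> d ^ n" by (rule self_le_power) (use d0 n1 in auto)
      then show ?thesis by (simp add: of_nat_diff)
    qed
    finally show ?thesis by simp
  qed
  have R: "(\<Sum>a\<in>?O. X a) = Q s m0 * real d ^ n + (1 - Q s m0) * real d ^ (n - 1)"
  proof -
    let ?cnt = "\<lambda>m. card {a\<in>?O. lin n (\<lambda>j. int (a j)) m mod int d = lin n (\<lambda>j. int (a j)) m0 mod int d}"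
    have "(\<Sum>a\<in>?O. X a) = (\<Sum>a\<in>?O. \<Sum>m\<in>?O. Q s m * (if lin n (\<lambda>j. int (a j)) m mod int d = lin n (\<lambda>j. int (a j)) m0 mod int d then 1 else 0))"
      unfolding X_def D_def by simp
    also have "\<dots> = (\<Sum>m\<in>?O. \<Sum>a\<in>?O. Q s m * (if lin n (\<lambda>j. int (a j)) m mod int d = lin n (\<lambda>j. int (a j)) m0 mod int d then 1 else 0))"
      by (rule sum.swap)
    also have "\<dots> = (\<Sum>m\<in>?O. Q s m * real (?cnt m))"
    proof (rule sum.cong[OF refl])
      fix m assume "m \<in> ?O"
      show "(\<Sum>a\<in>?O. Q s m * (if lin n (\<lambda>j. int (a j)) m mod int d = lin n (\<lambda>j. int (a j)) m0 mod int d then 1 else 0)) = Q s m * real (?cnt m)"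
        by (simp add: sum_distrib_left[symmetric] sum.If_cases[OF finO] Int_def)
    qed
    also have "\<dots> = Q s m0 * real (?cnt m0) + (\<Sum>m\<in>?O - {m0}. Q s m * real (?cnt m))"
      by (rule sum.remove[OF finO m0])
    also have "?cnt m0 = d ^ n" using card_outputs by simp
    also have "(\<Sum>m\<in>?O - {m0}. Q s m * real (?cnt m)) = (\<Sum>m\<in>?O - {m0}. Q s m * real d ^ (n - 1))"
    proof (rule sum.cong[OF refl])
      fix m assume m: "m \<in> ?O - {m0}"
      have "d * ?cnt m = d ^ n" using count_m[of m m0] m m0 by auto
      also have "d ^ n = d * d ^ (n - 1)" using n1 by (cases n) auto
      finally have "?cnt m = d ^ (n - 1)" using d0 by simp
      then show "Q s m * real (?cnt m) = Q s m * real d ^ (n - 1)" by simp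
    qed
    also have "(\<Sum>m\<in>?O - {m0}. Q s m * real d ^ (n - 1)) = (1 - Q s m0) * real d ^ (n - 1)"
    proof -
      have "(\<Sum>m\<in>?O - {m0}. Q s m) = 1 - Q s m0" using sum.remove[OF finO m0, of "Q s"] Qsum[OF s] by simp
      then show ?thesis by (simp add: sum_distrib_right[symmetric])
    qed
    finally show ?thesis by simp
  qed
  define N where "N = real d ^ (n - 1)"
  have dn: "real d ^ n = real d * N" unfolding N_def using n1 by (cases n) auto
  have d2: "real d \<ge> 2" using pd prime_ge_2_nat by simp
  have Npos: "N > 0" unfolding N_def using d0 by simp
  have "Q s m0 * (real d * N) + (1 - Q s m0) * N = real d + (real d * N - real d) / real d"
    using L R dn unfolding N_def by simp
  also have "(real d * N - real d) / real d = N - 1" using d2 by (simp add: field_simps)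
  finally have "Q s m0 * N * (real d - 1) = real d - 1" by (simp add: algebra_simps)
  then have "Q s m0 * N = 1" using d2 by simp
  then show ?thesis unfolding N_def[symmetric] using Npos by (simp add: field_simps)
qed

end

lemma lin_ones: "lin n (\<lambda>_. 1) m = int (\<Sum>j<n. m j)"
  unfolding lin_def by simp

lemma mod_nat_int: "k < d \<Longrightarrow> (x mod d = k) \<longleftrightarrow> (int x mod int d = int k mod int d)"
  by (metis mod_less of_nat_eq_iff zmod_int)

lemma count_sum:
  assumes pd: "prime d" and n1: "n \<ge> 1" and k: "k < d"
  shows "card {m\<in>outputs n d. (\<Sum>j<n. m j) mod d = k} = d ^ (n - 1)"
proof -
  have "d * card {m\<in>outputs n d. lin n (\<lambda>_. 1) m mod int d = int k mod int d} = d ^ n"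
    by (rule lin_count[of 0 n d "\<lambda>_. 1"]) (use n1 pd in auto)
  moreover have "{m\<in>outputs n d. lin n (\<lambda>_. 1) m mod int d = int k mod int d} = {m\<in>outputs n d. (\<Sum>j<n. m j) mod d = k}"
    unfolding lin_ones using mod_nat_int[OF k] by simp
  moreover have "d ^ n = d * d ^ (n - 1)" using n1 by (cases n) auto
  moreover have "d > 0" using pd prime_gt_0_nat by simp
  ultimately show ?thesis by simp
qed

definition P0 :: "nat \<Rightarrow> (nat \<Rightarrow> nat) \<Rightarrow> nat \<Rightarrow> ((nat \<Rightarrow> nat) \<Rightarrow> nat) \<Rightarrow> (nat \<Rightarrow> nat) \<Rightarrow> (nat \<Rightarrow> nat) \<Rightarrow> real" where
  "P0 n c d f s m = (if s \<in> inputs n c \<and> m \<in> outputs n d \<and> (\<Sum>j<n. m j) mod d = f s then 1 / real d ^ (n - 1) else 0)"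

lemma P0_sum_filter:
  assumes "s \<in> inputs n c" "finite A" "A \<subseteq> outputs n d"
  shows "(\<Sum>m\<in>A. P0 n c d f s m) = real (card {m\<in>A. (\<Sum>j<n. m j) mod d = f s}) / real d ^ (n - 1)"
proof -
  have "(\<Sum>m\<in>A. P0 n c d f s m) = (\<Sum>m\<in>A. if (\<Sum>j<n. m j) mod d = f s then 1 / real d ^ (n - 1) else 0)"
    by (rule sum.cong[OF refl]) (use assms in \<open>auto simp: P0_def\<close>)
  also have "\<dots> = (\<Sum>m\<in>{m\<in>A. (\<Sum>j<n. m j) mod d = f s}. 1 / real d ^ (n - 1))"
    by (rule sum.inter_filter[OF assms(2), symmetric])
  also have "\<dots> = real (card {m\<in>A. (\<Sum>j<n. m j) mod d = f s}) / real d ^ (n - 1)" by simp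
  finally show ?thesis .
qed

lemma P0_NS:
  assumes pd: "prime d" and n1: "n \<ge> 1" and fd: "\<forall>s\<in>inputs n c. f s < d"
  shows "P0 n c d f \<in> NS n c d"
proof -
  have d0: "d > 0" using pd prime_gt_0_nat by simp
  have finO: "finite (outputs n d)" by (rule finite_outputs[OF d0])
  have cdist: "cond_dist n c d (P0 n c d f)"
    unfolding cond_dist_def
  proof (intro conjI allI impI ballI)
    fix s m show "P0 n c d f s m \<ge> 0" unfolding P0_def by simp
  next
    fix s m assume "s \<notin> inputs n c \<or> m \<notin> outputs n d" then show "P0 n c d f s m = 0" unfolding P0_def by auto
  next
    fix s assume s: "s \<in> inputs n c"
    have "(\<Sum>m\<in>outputs n d. P0 n c d f s m) = real (card {m\<in>outputs n d. (\<Sum>j<n. m j) mod d = f s}) / real d ^ (n - 1)"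
      by (rule P0_sum_filter[OF s finO order_refl])
    also have "card {m\<in>outputs n d. (\<Sum>j<n. m j) mod d = f s} = d ^ (n - 1)"
      by (rule count_sum[OF pd n1]) (use fd s in auto)
    finally show "(\<Sum>m\<in>outputs n d. P0 n c d f s m) = 1" using d0 by simp
  qed
  have nsig: "non_signalling n c d (P0 n c d f)"
    unfolding non_signalling_def
  proof (intro allI impI ballI)
    fix J s s' m0
    assume J: "J \<subseteq> {..<n}" and s: "s \<in> inputs n c" and s': "s' \<in> inputs n c"
      and ag: "\<forall>j<n. j \<notin> J \<longrightarrow> s j = s' j" and m0: "m0 \<in> outputs n d"
    define A where "A = {m\<in>outputs n d. \<forall>j<n. j \<notin> J \<longrightarrow> m j = m0 j}"
    have AO: "A \<subseteq> outputs n d" and finA: "finite A" unfolding A_def using finO by auto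
    show "(\<Sum>m\<in>{m\<in>outputs n d. \<forall>j<n. j \<notin> J \<longrightarrow> m j = m0 j}. P0 n c d f s m) =
          (\<Sum>m\<in>{m\<in>outputs n d. \<forall>j<n. j \<notin> J \<longrightarrow> m j = m0 j}. P0 n c d f s' m)"
    proof (cases "J = {}")
      case True
      have "s = s'"
      proof
        fix i show "s i = s' i" using ag s s' True unfolding inputs_def by (cases "i < n") auto
      qed
      then show ?thesis by simp
    next
      case False
      then obtain j0 where j0: "j0 \<in> J" by blast
      have j0n: "j0 < n" using j0 J by auto
      let ?\<sigma> = "\<lambda>m. m(j0 := (m j0 + 1) mod d)"
      have sub: "?\<sigma> ` A \<subseteq> A" using shift_outputs(1)[OF j0n d0] j0 unfolding A_def by auto
      have inj: "inj_on ?\<sigma> A" using inj_on_subset[OF shift_outputs(2)[OF j0n d0] AO] .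
      have wsh: "\<forall>x\<in>A. lin n (\<lambda>_. 1) (?\<sigma> x) mod int d = (lin n (\<lambda>_. 1) x + 1) mod int d"
        using lin_shift[OF j0n d0, of "\<lambda>_. 1"] by simp
      have cnt: "d * card {x\<in>A. lin n (\<lambda>_. 1) x mod int d = k mod int d} = card A" for k
      proof (rule uniform_count[OF finA sub inj wsh pd])
        show "\<not> int d dvd 1" using prime_ge_2_nat[OF pd] zdvd_imp_le[of "int d" 1] by auto
      qed
      have cnt2: "card {m\<in>A. (\<Sum>j<n. m j) mod d = f t} = card A div d" if t: "t \<in> inputs n c" for t
      proof -
        have "{m\<in>A. (\<Sum>j<n. m j) mod d = f t} = {x\<in>A. lin n (\<lambda>_. 1) x mod int d = int (f t) mod int d}"
          unfolding lin_ones using mod_nat_int[of "f t" d] fd t by simp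
        moreover have e: "d * card {x\<in>A. lin n (\<lambda>_. 1) x mod int d = int (f t) mod int d} = card A" by (rule cnt)
        ultimately show ?thesis using d0 by (simp add: e[symmetric])
      qed
      show ?thesis unfolding A_def[symmetric] P0_sum_filter[OF s finA AO] P0_sum_filter[OF s' finA AO]
        cnt2[OF s] cnt2[OF s'] ..
    qed
  qed
  show ?thesis unfolding NS_def using cdist nsig by simp
qed

lemma P0_delta:
  assumes pd: "prime d" and n1: "n \<ge> 1" and fd: "\<forall>s\<in>inputs n c. f s < d"
  shows "produces_delta n c d f (P0 n c d f)"
  unfolding produces_delta_def correlator_def
proof (intro ballI allI impI)
  fix s k assume s: "s \<in> inputs n c" and k: "k < d"
  have d0: "d > 0" using pd prime_gt_0_nat by simp
  have finO: "finite (outputs n d)" by (rule finite_outputs[OF d0])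
  have "(\<Sum>m\<in>{m\<in>outputs n d. (\<Sum>j<n. m j) mod d = k}. P0 n c d f s m)
      = real (card {m\<in>{m\<in>outputs n d. (\<Sum>j<n. m j) mod d = k}. (\<Sum>j<n. m j) mod d = f s}) / real d ^ (n - 1)"
    by (rule P0_sum_filter[OF s]) (use finO in auto)
  also have "\<dots> = (if k = f s then 1 else 0)"
  proof (cases "k = f s")
    case True
    then have "{m\<in>{m\<in>outputs n d. (\<Sum>j<n. m j) mod d = k}. (\<Sum>j<n. m j) mod d = f s} = {m\<in>outputs n d. (\<Sum>j<n. m j) mod d = k}" by auto
    then show ?thesis using True count_sum[OF pd n1 k] d0 by simp
  next
    case False
    then have "{m\<in>{m\<in>outputs n d. (\<Sum>j<n. m j) mod d = k}. (\<Sum>j<n. m j) mod d = f s} = {}" by auto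
    then show ?thesis using False by (simp only: card.empty) simp
  qed
  finally show "(\<Sum>m\<in>{m\<in>outputs n d. (\<Sum>j<n. m j) mod d = k}. P0 n c d f s m) = (if k = f s then 1 else 0)" .
qed

lemma mix_delta:
  assumes Q: "cond_dist n c d Q" and R: "cond_dist n c d R" and P: "produces_delta n c d f P"
    and Pe: "P = (\<lambda>s m. t * Q s m + (1 - t) * R s m)" and t0: "0 < t" and t1: "t < 1"
  shows "produces_delta n c d f Q"
  unfolding produces_delta_def
proof (intro ballI allI impI)
  fix s k assume s: "s \<in> inputs n c" and k: "k < d"
  let ?A = "{m\<in>outputs n d. (\<Sum>j<n. m j) mod d = k}"
  have sQ: "(\<Sum>m\<in>outputs n d. Q s m) = 1" and sR: "(\<Sum>m\<in>outputs n d. R s m) = 1"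
    using Q R s unfolding cond_dist_def by auto
  have finO: "finite (outputs n d)" using sQ by (metis sum.infinite zero_neq_one)
  have nnQ: "\<And>m. Q s m \<ge> 0" and nnR: "\<And>m. R s m \<ge> 0" using Q R unfolding cond_dist_def by auto
  have cQ0: "correlator n d Q s k \<ge> 0" unfolding correlator_def by (rule sum_nonneg) (use nnQ in auto)
  have cR0: "correlator n d R s k \<ge> 0" unfolding correlator_def by (rule sum_nonneg) (use nnR in auto)
  have cQ1: "correlator n d Q s k \<le> 1" unfolding correlator_def
    using sum_mono2[OF finO, of ?A "Q s"] nnQ sQ by auto
  have cR1: "correlator n d R s k \<le> 1" unfolding correlator_def
    using sum_mono2[OF finO, of ?A "R s"] nnR sR by auto
  have cP: "correlator n d P s k = t * correlator n d Q s k + (1 - t) * correlator n d R s k"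
    unfolding correlator_def Pe by (simp add: sum.distrib sum_distrib_left)
  have Pk: "correlator n d P s k = (if k = f s then 1 else 0)" using P s k unfolding produces_delta_def by auto
  show "correlator n d Q s k = (if k = f s then 1 else 0)"
  proof (cases "k = f s")
    case True
    then have e: "t * correlator n d Q s k + (1 - t) * correlator n d R s k = 1" using cP Pk by simp
    show ?thesis
    proof (rule ccontr)
      assume "correlator n d Q s k \<noteq> (if k = f s then 1 else 0)"
      then have "correlator n d Q s k < 1" using cQ1 True by simp
      then have "t * correlator n d Q s k < t" using t0 by simp
      moreover have "(1 - t) * correlator n d R s k \<le> 1 - t" using cR1 t1 by (simp add: mult_left_le)
      ultimately show False using e by linarith
    qed
  next
    case False
    then have e: "t * correlator n d Q s k + (1 - t) * correlator n d R s k = 0" using cP Pk by simp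
    have "t * correlator n d Q s k \<ge> 0" "(1 - t) * correlator n d R s k \<ge> 0" using cQ0 cR0 t0 t1 by auto
    then have "t * correlator n d Q s k = 0" using e by linarith
    then show ?thesis using False t0 by simp
  qed
qed

lemma support_delta:
  assumes QNS: "Q \<in> NS n c d" and Qd: "produces_delta n c d f Q" and d0: "d > 0"
  shows "\<forall>s\<in>inputs n c. \<forall>m\<in>outputs n d. Q s m \<noteq> 0 \<longrightarrow> (\<Sum>j<n. m j) mod d = f s"
proof (intro ballI impI)
  fix s m assume s: "s \<in> inputs n c" and m: "m \<in> outputs n d" and q: "Q s m \<noteq> 0"
  show "(\<Sum>j<n. m j) mod d = f s"
  proof (rule ccontr)
    assume ne: "(\<Sum>j<n. m j) mod d \<noteq> f s"
    let ?k = "(\<Sum>j<n. m j) mod d"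
    have "?k < d" using d0 by simp
    then have "correlator n d Q s ?k = 0" using Qd s ne unfolding produces_delta_def by auto
    then have z: "(\<Sum>m'\<in>{m'\<in>outputs n d. (\<Sum>j<n. m' j) mod d = ?k}. Q s m') = 0" unfolding correlator_def .
    have nn: "\<And>m'. Q s m' \<ge> 0" using QNS unfolding NS_def cond_dist_def by auto
    have finO: "finite (outputs n d)" by (rule finite_outputs[OF d0])
    have "\<forall>m'\<in>{m'\<in>outputs n d. (\<Sum>j<n. m' j) mod d = ?k}. Q s m' = 0"
      using sum_nonneg_eq_0_iff[of "{m'\<in>outputs n d. (\<Sum>j<n. m' j) mod d = ?k}" "Q s"] z nn finO by auto
    then show False using m q by auto
  qed
qed

lemma unique:
  assumes n2: "n \<ge> 2" and c1: "\<forall>j<n. c j \<ge> 1" and pd: "prime d" and fd: "\<forall>s\<in>inputs n c. f s < d"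
    and nbl: "\<not> bipartite_linear n c d f"
    and QNS: "Q \<in> NS n c d" and Qd: "produces_delta n c d f Q"
  shows "Q = P0 n c d f"
proof -
  have d0: "d > 0" using pd prime_gt_0_nat by simp
  have sup: "\<forall>s\<in>inputs n c. \<forall>m\<in>outputs n d. Q s m \<noteq> 0 \<longrightarrow> (\<Sum>j<n. m j) mod d = f s"
    by (rule support_delta[OF QNS Qd d0])
  interpret box n d c f Q
    by unfold_locales (use n2 c1 pd fd QNS sup in auto)
  show ?thesis
  proof (intro ext)
    fix s m
    show "Q s m = P0 n c d f s m"
    proof (cases "s \<in> inputs n c \<and> m \<in> outputs n d")
      case True
      then have s: "s \<in> inputs n c" and m: "m \<in> outputs n d" by auto
      show ?thesis
      proof (cases "(\<Sum>j<n. m j) mod d = f s")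
        case True
        then show ?thesis using inversion[OF nbl s m True] s m unfolding P0_def by simp
      next
        case False
        then have "Q s m = 0" using sup s m by blast
        then show ?thesis using False unfolding P0_def by simp
      qed
    next
      case False
      then show ?thesis using Qout unfolding P0_def by auto
    qed
  qed
qed

theorem proposition2p3p2:
  fixes n d :: nat and c :: "nat \<Rightarrow> nat" and f :: "(nat \<Rightarrow> nat) \<Rightarrow> nat"
  assumes "n \<ge> 2"
    and "\<forall>j<n. c j \<ge> 1"
    and "prime d"
    and "\<forall>s\<in>inputs n c. f s < d"
    and "\<not> bipartite_linear n c d f"
  shows "\<exists>P. P \<in> NS n c d \<and> produces_delta n c d f P \<and>
             (\<forall>Q. Q \<in> NS n c d \<and> produces_delta n c d f Q \<longrightarrow> Q = P) \<and>
             vertex_of P (NS n c d)"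
proof (intro exI conjI allI impI)
  have n1: "n \<ge> 1" using assms(1) by simp
  show PNS: "P0 n c d f \<in> NS n c d" by (rule P0_NS[OF assms(3) n1 assms(4)])
  show Pd: "produces_delta n c d f (P0 n c d f)" by (rule P0_delta[OF assms(3) n1 assms(4)])
  show "Q = P0 n c d f" if "Q \<in> NS n c d \<and> produces_delta n c d f Q" for Q
    using unique[OF assms] that by blast
  show "vertex_of (P0 n c d f) (NS n c d)"
    unfolding vertex_of_def
  proof (intro conjI ballI allI impI)
    show "P0 n c d f \<in> NS n c d" by (rule PNS)
  next
    fix Q R t assume Q: "Q \<in> NS n c d" and R: "R \<in> NS n c d"
      and h: "0 < t \<and> t < 1 \<and> P0 n c d f = (\<lambda>s m. t * Q s m + (1 - t) * R s m)"
    have cQ: "cond_dist n c d Q" and cR: "cond_dist n c d R" using Q R unfolding NS_def by auto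
    have Qd: "produces_delta n c d f Q" by (rule mix_delta[OF cQ cR Pd]) (use h in auto)
    have h2: "P0 n c d f = (\<lambda>s m. (1 - t) * R s m + (1 - (1 - t)) * Q s m)" using h by (auto simp: add.commute)
    have Rd: "produces_delta n c d f R" by (rule mix_delta[OF cR cQ Pd h2]) (use h in auto)
    have "Q = P0 n c d f" using unique[OF assms Q Qd] .
    moreover have "R = P0 n c d f" using unique[OF assms R Rd] .
    ultimately show "Q = R" by simp
  qed
qed

end
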